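(* Let $n$ be a positive integer divisible by $8$, let $\varepsilon>0$ and $d=1/(128\varepsilon)$. For $S\subseteq[n]$ with $|S|=n/2$, let $G_S$ be the weighted complete bipartite graph on $[n]$ with an edge between every vertex of $S$ and every vertex of $[n]\setminus S$, each of weight $2d/n$. Let $\mathcal A$ be a collection of such graphs $G_S$ such that for any two distinct $G_S,G_T\in\mathcal A$, $\frac n8<|S\cap T|<\frac{3n}8$. Then for any distinct $G_S,G_T\in\mathcal A$ and any $R\subseteq[n]$: if $\Phi_{G_S}(R)>\frac{7nd}{16}$, then $\Phi_{G_T}(R)\le\frac{6nd}{16}$.
   Context: For a weighted graph $G$ on $[n]$ and $R\subseteq[n]$, $\Phi_G(R)$ denotes the total weight of edges with exactly one endpoint in $R$ (the cut specified by $R$). *)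

theory Defs
  imports Complex_Main
begin

text \<open>A weighted graph on [n] = {1..n} is a symmetric weight function w :: nat => nat => real
  (weight 0 = no edge). The cut Phi_G(R): total weight of edges with exactly one endpoint in R.\<close>

definition cut_weight :: "nat \<Rightarrow> (nat \<Rightarrow> nat \<Rightarrow> real) \<Rightarrow> nat set \<Rightarrow> real" where
  "cut_weight n w R = (\<Sum>u\<in>{1..n} \<inter> R. \<Sum>v\<in>{1..n} - R. w u v)"

definition GS :: "nat \<Rightarrow> real \<Rightarrow> nat set \<Rightarrow> (nat \<Rightarrow> nat \<Rightarrow> real)" where
  "GS n d S = (\<lambda>u v. if u \<in> {1..n} \<and> v \<in> {1..n} \<and> ((u \<in> S \<and> v \<notin> S) \<or> (u \<notin> S \<and> v \<in> S))
                     then 2 * d / real n else 0)"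

end

theory Submission
  imports Defs
begin
lemma sum_if_const: "finite A \<Longrightarrow> (\<Sum>v\<in>A. if P v then (c::real) else 0) = c * real (card {v\<in>A. P v})"
  by (simp add: sum.inter_filter[symmetric])

lemma cut_GS:
  assumes "S \<subseteq> {1..n}" "R \<subseteq> {1..n}"
  shows "cut_weight n (GS n d S) R = 2*d/real n * (real (card (R\<inter>S)) * real (card ({1..n}-R-S)) + real (card (R-S)) * real (card (S-R)))"
proof -
  let ?w = "2*d/real n"
  have fR: "finite R" using assms(2) finite_subset by blast
  have "cut_weight n (GS n d S) R = (\<Sum>u\<in>R. \<Sum>v\<in>{1..n} - R. GS n d S u v)"
    unfolding cut_weight_def using assms(2) by (simp add: Int_absorb1)
  also have "\<dots> = (\<Sum>u\<in>R\<inter>S. \<Sum>v\<in>{1..n} - R. GS n d S u v) + (\<Sum>u\<in>R-S. \<Sum>v\<in>{1..n} - R. GS n d S u v)"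
    using fR by (rule sum.Int_Diff)
  also have "(\<Sum>u\<in>R\<inter>S. \<Sum>v\<in>{1..n} - R. GS n d S u v) = (\<Sum>u\<in>R\<inter>S. ?w * real (card ({1..n}-R-S)))"
  proof (rule sum.cong[OF refl])
    fix u assume u: "u \<in> R\<inter>S"
    have "(\<Sum>v\<in>{1..n} - R. GS n d S u v) = (\<Sum>v\<in>{1..n} - R. if v \<notin> S then ?w else 0)"
      using u assms by (intro sum.cong) (auto simp: GS_def)
    also have "\<dots> = ?w * real (card {v\<in>{1..n}-R. v \<notin> S})" by (rule sum_if_const) simp
    also have "{v\<in>{1..n}-R. v \<notin> S} = {1..n}-R-S" by auto
    finally show "(\<Sum>v\<in>{1..n} - R. GS n d S u v) = ?w * real (card ({1..n}-R-S))" .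
  qed
  also have "(\<Sum>u\<in>R-S. \<Sum>v\<in>{1..n} - R. GS n d S u v) = (\<Sum>u\<in>R-S. ?w * real (card (S-R)))"
  proof (rule sum.cong[OF refl])
    fix u assume u: "u \<in> R-S"
    have "(\<Sum>v\<in>{1..n} - R. GS n d S u v) = (\<Sum>v\<in>{1..n} - R. if v \<in> S then ?w else 0)"
      using u assms by (intro sum.cong) (auto simp: GS_def)
    also have "\<dots> = ?w * real (card {v\<in>{1..n}-R. v \<in> S})" by (rule sum_if_const) simp
    also have "{v\<in>{1..n}-R. v \<in> S} = S-R" using assms by auto
    finally show "(\<Sum>v\<in>{1..n} - R. GS n d S u v) = ?w * real (card (S-R))" .
  qed
  finally show ?thesis by (simp add: algebra_simps)
qed

lemma key:
  fixes a1 a2 a3 a4 k s :: real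
  assumes "0 \<le> a1" "a1 \<le> k" "0 \<le> a4" "a4 \<le> k" "0 \<le> a2" "a2 \<le> s - k" "0 \<le> a3" "a3 \<le> s - k"
    "s/4 < k" "k < 3*s/4"
  shows "((a1+a2)*(s-a3-a4) + (a3+a4)*(s-a1-a2)) + ((a1+a3)*(s-a2-a4) + (a2+a4)*(s-a1-a3)) < 13/8 * s^2"
proof -
  have id: "((a1+a2)*(s-a3-a4) + (a3+a4)*(s-a1-a2)) + ((a1+a3)*(s-a2-a4) + (a2+a4)*(s-a1-a3))
     = s^2 - (a1+a2+a3+a4-s)^2 + (a1-a4)^2 + (a2-a3)^2"
    by (simp add: algebra_simps power2_eq_square)
  have b1: "(a1-a4)^2 \<le> k^2"
  proof -
    have "\<bar>a1-a4\<bar> \<le> k" using assms by linarith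
    then have "\<bar>a1-a4\<bar>^2 \<le> k^2" by (intro power_mono) auto
    then show ?thesis by simp
  qed
  have b2: "(a2-a3)^2 \<le> (s-k)^2"
  proof -
    have "\<bar>a2-a3\<bar> \<le> s-k" using assms by linarith
    then have "\<bar>a2-a3\<bar>^2 \<le> (s-k)^2" by (intro power_mono) auto
    then show ?thesis by simp
  qed
  have "(k - s/4) * (k - 3*s/4) < 0" using assms by (intro mult_pos_neg) auto
  moreover have "(k - s/4) * (k - 3*s/4) = k^2 - s*k + 3/16*s^2" by (simp add: field_simps power2_eq_square)
  moreover have "(s-k)^2 = s^2 - 2*s*k + k^2" by (simp add: algebra_simps power2_eq_square)
  ultimately have b3: "k^2 + (s-k)^2 < 5/8 * s^2" by linarith
  have "(a1+a2+a3+a4-s)^2 \<ge> 0" by simp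
  then show ?thesis using id b1 b2 b3 by linarith
qed

lemma split_card: "finite X \<Longrightarrow> real (card X) = real (card (X\<inter>Y)) + real (card (X-Y))"
  by (metis card_Un_disjoint Diff_disjoint Int_Diff_Un Int_Diff_disjoint finite_Diff finite_Int of_nat_add)

theorem lemma6p11:
  fixes n :: nat and \<epsilon> d :: real and \<A> :: "(nat \<Rightarrow> nat \<Rightarrow> real) set"
  assumes "n > 0" and "8 dvd n" and "\<epsilon> > 0" and "d = 1 / (128 * \<epsilon>)"
    and A_form: "\<forall>G\<in>\<A>. \<exists>S. S \<subseteq> {1..n} \<and> card S = n div 2 \<and> G = GS n d S"
    and A_sep: "\<forall>S T. S \<subseteq> {1..n} \<and> card S = n div 2 \<and> T \<subseteq> {1..n} \<and> card T = n div 2 \<and>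
                  GS n d S \<in> \<A> \<and> GS n d T \<in> \<A> \<and> GS n d S \<noteq> GS n d T \<longrightarrow>
                  real n / 8 < real (card (S \<inter> T)) \<and> real (card (S \<inter> T)) < 3 * real n / 8"
    and S: "S \<subseteq> {1..n}" "card S = n div 2" "GS n d S \<in> \<A>"
    and T: "T \<subseteq> {1..n}" "card T = n div 2" "GS n d T \<in> \<A>"
    and distinct: "GS n d S \<noteq> GS n d T"
    and R: "R \<subseteq> {1..n}"
    and big: "cut_weight n (GS n d S) R > 7 * real n * d / 16"
  shows "cut_weight n (GS n d T) R \<le> 6 * real n * d / 16"
proof -
  define s where "s = real n / 2"
  define k where "k = real (card (S \<inter> T))"
  define w where "w = 2 * d / real n"
  have dpos: "d > 0" using assms(3,4) by simp
  have wpos: "w > 0" using dpos assms(1) by (simp add: w_def)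
  have ws: "w * s^2 = real n * d / 2" using assms(1) by (simp add: w_def s_def power2_eq_square)
  have kb: "s/4 < k" "k < 3*s/4" using A_sep S T distinct R by (auto simp: s_def k_def)
  have n2: "real (n div 2) = s" using assms(2) by (auto simp: s_def elim!: dvdE)
  have cS: "real (card S) = s" and cT: "real (card T) = s" using S T n2 by auto
  have fin: "finite {1..n}" by simp
  have fS: "finite S" "finite T" "finite R" using S T R finite_subset by blast+
  define a1 where "a1 = real (card (R \<inter> (S \<inter> T)))"
  define a2 where "a2 = real (card (R \<inter> (S - T)))"
  define a3 where "a3 = real (card (R \<inter> (T - S)))"
  define a4 where "a4 = real (card (R \<inter> ({1..n} - S - T)))"
  define b4 where "b4 = real (card ({1..n} - S - T))"
  have cB2: "real (card (S - T)) = s - k" using split_card[of S T] fS cS by (simp add: k_def)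
  have cB3: "real (card (T - S)) = s - k" using split_card[of T S] fS cT by (simp add: k_def Int_commute)
  have "real n = real (card S) + real (card ({1..n} - S))" using split_card[OF fin, of S] S
    by (simp add: Int_absorb1)
  moreover have "real (card ({1..n} - S)) = real (card (T - S)) + b4"
  proof -
    have "({1..n}-S) \<inter> T = T - S" using T by auto
    then show ?thesis using split_card[of "{1..n} - S" T] unfolding b4_def by simp
  qed
  ultimately have cB4: "b4 = k" using cS cB3 s_def by simp
  have fB: "finite (S\<inter>T)" "finite (S-T)" "finite (T-S)" "finite ({1..n}-S-T)" using fS by auto
  have d1: "real (card ((S\<inter>T) - R)) = k - a1" using split_card[OF fB(1), of R] by (simp add: k_def a1_def Int_commute)
  have d2: "real (card ((S-T) - R)) = s - k - a2" using split_card[OF fB(2), of R] cB2 by (simp add: a2_def Int_commute)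
  have d3: "real (card ((T-S) - R)) = s - k - a3" using split_card[OF fB(3), of R] cB3 by (simp add: a3_def Int_commute)
  have d4: "real (card (({1..n}-S-T) - R)) = k - a4" using split_card[OF fB(4), of R] cB4 by (simp add: a4_def b4_def Int_commute)
  have "R \<inter> S \<inter> T = R \<inter> (S \<inter> T)" "R \<inter> S - T = R \<inter> (S - T)" by auto
  then have e1: "real (card (R \<inter> S)) = a1 + a2" using split_card[of "R\<inter>S" T] fS by (simp add: a1_def a2_def)
  have "R \<inter> T \<inter> S = R \<inter> (S \<inter> T)" "R \<inter> T - S = R \<inter> (T - S)" by auto
  then have e2: "real (card (R \<inter> T)) = a1 + a3" using split_card[of "R\<inter>T" S] fS by (simp add: a1_def a3_def)
  have "(R - S) \<inter> T = R \<inter> (T - S)" "R - S - T = R \<inter> ({1..n} - S - T)" using R by auto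
  then have e3: "real (card (R - S)) = a3 + a4" using split_card[of "R-S" T] fS by (simp add: a3_def a4_def)
  have "(R - T) \<inter> S = R \<inter> (S - T)" "R - T - S = R \<inter> ({1..n} - S - T)" using R by auto
  then have e4: "real (card (R - T)) = a2 + a4" using split_card[of "R-T" S] fS by (simp add: a2_def a4_def)
  have "(S - R) \<inter> T = (S\<inter>T) - R" "S - R - T = (S-T) - R" by auto
  then have e5: "real (card (S - R)) = (k - a1) + (s - k - a2)" using split_card[of "S-R" T] fS d1 d2 by simp
  have "(T - R) \<inter> S = (S\<inter>T) - R" "T - R - S = (T-S) - R" by auto
  then have e6: "real (card (T - R)) = (k - a1) + (s - k - a3)" using split_card[of "T-R" S] fS d1 d3 by simp
  have "({1..n} - R - S) \<inter> T = (T-S) - R" "{1..n} - R - S - T = ({1..n}-S-T) - R" using T by auto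
  then have e7: "real (card ({1..n} - R - S)) = (s - k - a3) + (k - a4)" using split_card[of "{1..n} - R - S" T] d3 d4 by simp
  have "({1..n} - R - T) \<inter> S = (S-T) - R" "{1..n} - R - T - S = ({1..n}-S-T) - R" using S by auto
  then have e8: "real (card ({1..n} - R - T)) = (s - k - a2) + (k - a4)" using split_card[of "{1..n} - R - T" S] d2 d4 by simp
  have cutS: "cut_weight n (GS n d S) R = w * ((a1+a2)*(s-a3-a4) + (a3+a4)*(s-a1-a2))"
  proof -
    have "cut_weight n (GS n d S) R = w * (real (card (R\<inter>S)) * real (card ({1..n}-R-S)) + real (card (R-S)) * real (card (S-R)))"
      using cut_GS[OF S(1) R, of d] by (simp add: w_def)
    also have "\<dots> = w * ((a1+a2)*((s - k - a3) + (k - a4)) + (a3+a4)*((k - a1) + (s - k - a2)))"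
      by (simp only: e1 e3 e5 e7)
    finally show ?thesis by (simp add: algebra_simps)
  qed
  have cutT: "cut_weight n (GS n d T) R = w * ((a1+a3)*(s-a2-a4) + (a2+a4)*(s-a1-a3))"
  proof -
    have "cut_weight n (GS n d T) R = w * (real (card (R\<inter>T)) * real (card ({1..n}-R-T)) + real (card (R-T)) * real (card (T-R)))"
      using cut_GS[OF T(1) R, of d] by (simp add: w_def)
    also have "\<dots> = w * ((a1+a3)*((s - k - a2) + (k - a4)) + (a2+a4)*((k - a1) + (s - k - a3)))"
      by (simp only: e2 e4 e6 e8)
    finally show ?thesis by (simp add: algebra_simps)
  qed
  have "a1 \<ge> 0" "a2 \<ge> 0" "a3 \<ge> 0" "a4 \<ge> 0" "a1 \<le> k" "a2 \<le> s - k" "a3 \<le> s - k" "a4 \<le> k"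
    using d1 d2 d3 d4 by (auto simp: a1_def a2_def a3_def a4_def)
  then have K: "((a1+a2)*(s-a3-a4) + (a3+a4)*(s-a1-a2)) + ((a1+a3)*(s-a2-a4) + (a2+a4)*(s-a1-a3)) < 13/8 * s^2"
    using kb by (intro key) auto
  have "w * (((a1+a2)*(s-a3-a4) + (a3+a4)*(s-a1-a2)) + ((a1+a3)*(s-a2-a4) + (a2+a4)*(s-a1-a3))) < w * (13/8 * s^2)"
    using K wpos by (intro mult_strict_left_mono) auto
  then have "cut_weight n (GS n d S) R + cut_weight n (GS n d T) R < 13/8 * (w * s^2)"
    unfolding cutS cutT by (simp add: algebra_simps)
  then show ?thesis using big ws by linarith

qed
end
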